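(* Let $S$ be a triangulated surface with set of simplices $\mathcal V=\mathcal V_0\cup\mathcal V_1\cup\mathcal V_2$, and let $V:\mathcal V_0\to\mathcal N$ be any map. Then there is a unique simplicial surface tonnetz $T$ on $S$ which is a vertex tonnetz satisfying $[T(\rho)]=\{V(\rho)\}$ for every vertex $\rho\in\mathcal V_0$ and, for every face $\sigma\in\mathcal V_2$, $T(\sigma)$ equals the multiset $\{V(\rho)\mid \rho\in\mathcal V_0,\ \rho<\sigma\}$ (the values of $V$ on the three vertices of $\sigma$, counted with multiplicity).
   Context: Let $\mathcal N=\mathbb Z/12\mathbb Z$ (pitch classes). A multiset in $\mathcal N$ is a finite collection of elements of $\mathcal N$ with (finite) multiplicities; $\operatorname{Multisets}(\mathcal N)$ denotes the set of all of them. For a multiset $\mathcal C$, $|\mathcal C|$ is its order (number of elements counted with multiplicity) and $[\mathcal C]$ its underlying set. For a set $\mathcal A$ and multiset $\mathcal C$, a bijection $\phi:\mathcal A\to\mathcal C$ means a map $\phi:\mathcal A\to[\mathcal C]$ such that for each $c\in[\mathcal C]$ the cardinality of $\phi^{-1}(c)$ equals the multiplicity of $c$ in $\mathcal C$. Let $S$ be a surface (2-dimensional topological manifold, without boundary) with a triangulation whose sets of vertices, edges and faces are $\mathcal V_0,\mathcal V_1,\mathcal V_2$; $\mathcal V=\mathcal V_0\cup\mathcal V_1\cup\mathcal V_2$ is partially ordered by inclusion ($\le$, $<$), and $\tau\prec\sigma$ means $\tau\le\sigma$ with $\tau$ of codimension 1 in $\sigma$. Every edge has two vertices and lies in exactly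 two faces. A simplicial surface tonnetz on $S$ is a map $T:\mathcal V\to\operatorname{Multisets}(\mathcal N)$ such that: (1) (downwards coherent) for each $\sigma\in\mathcal V_1\cup\mathcal V_2$ there exists a bijection $\partial_\sigma:\{\tau\mid\tau\prec\sigma\}\to T(\sigma)$ such that $\partial_\sigma(\tau)=N$ implies $N\in T(\tau)$; (2) (upwards coherent) for each $\rho\in\mathcal V_0\cup\mathcal V_1$ there exists a bijection $\Delta_\rho:\{\tau\mid\tau\succ\rho\}\to T(\rho)$ such that $\Delta_\rho(\tau)=N$ implies $N\in T(\tau)$. (The bijections are not part of the data; only their existence is required.) A tonnetz $T$ is a vertex tonnetz if $[T(\rho)]$ has cardinality one for every vertex $\rho\in\mathcal V_0$. *)

theory Defs
  imports Main "HOL-Library.Multiset" "HOL-Library.Numeral_Type"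
begin

text \<open>Pitch classes: the type 12 of HOL-Library.Numeral_Type is Z/12Z.\<close>
type_synonym pitch = "12"

text \<open>Simplices are represented by their (finite) vertex sets; vertices are
  singletons, edges 2-sets, faces 3-sets, ordered by inclusion.
  A triangulated surface (without boundary): closed under faces, each edge lies in
  exactly two faces, each vertex lies in finitely many edges, and the link of every
  vertex is a nonempty connected graph (hence, being 2-regular and finite, a circle).\<close>
definition vlink :: "'v set set \<Rightarrow> 'v set set \<Rightarrow> 'v \<Rightarrow> 'v set" where
  "vlink V1 V2 v = {u. {v, u} \<in> V1}"

definition vlink_rel :: "'v set set \<Rightarrow> 'v \<Rightarrow> ('v \<times> 'v) set" where
  "vlink_rel V2 v = {(u, w). {v, u, w} \<in> V2 \<and> card {v, u, w} = 3}"

definition triangulated_surface :: "'v set set \<Rightarrow> 'v set set \<Rightarrow> 'v set set \<Rightarrow> bool" where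
  "triangulated_surface V0 V1 V2 \<longleftrightarrow>
     (\<forall>\<rho>\<in>V0. \<exists>v. \<rho> = {v}) \<and>
     (\<forall>e\<in>V1. card e = 2 \<and> (\<forall>v\<in>e. {v} \<in> V0)) \<and>
     (\<forall>f\<in>V2. card f = 3 \<and> (\<forall>e. e \<subseteq> f \<and> card e = 2 \<longrightarrow> e \<in> V1)) \<and>
     (\<forall>e\<in>V1. card {f\<in>V2. e \<subseteq> f} = 2) \<and>
     (\<forall>v. {v} \<in> V0 \<longrightarrow>
        finite {e\<in>V1. v \<in> e} \<and> vlink V1 V2 v \<noteq> {} \<and>
        (\<forall>u\<in>vlink V1 V2 v. \<forall>w\<in>vlink V1 V2 v. (u, w) \<in> (vlink_rel V2 v)\<^sup>*))"

definition codim1 :: "'v set \<Rightarrow> 'v set \<Rightarrow> bool" where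
  "codim1 \<tau> \<sigma> \<longleftrightarrow> \<tau> \<subseteq> \<sigma> \<and> card \<sigma> = card \<tau> + 1"

definition mset_bij :: "('a \<Rightarrow> 'b) \<Rightarrow> 'a set \<Rightarrow> 'b multiset \<Rightarrow> bool" where
  "mset_bij \<phi> A C \<longleftrightarrow> \<phi> ` A \<subseteq> set_mset C \<and>
     (\<forall>c \<in># C. finite {a\<in>A. \<phi> a = c} \<and> card {a\<in>A. \<phi> a = c} = count C c)"

definition surface_tonnetz ::
  "'v set set \<Rightarrow> 'v set set \<Rightarrow> 'v set set \<Rightarrow> ('v set \<Rightarrow> pitch multiset) \<Rightarrow> bool" where
  "surface_tonnetz V0 V1 V2 T \<longleftrightarrow>
     (let V = V0 \<union> V1 \<union> V2 in
     (\<forall>\<sigma>\<in>V1 \<union> V2. \<exists>bd. mset_bij bd {\<tau>\<in>V. codim1 \<tau> \<sigma>} (T \<sigma>) \<and>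
          (\<forall>\<tau>\<in>{\<tau>\<in>V. codim1 \<tau> \<sigma>}. bd \<tau> \<in># T \<tau>)) \<and>
     (\<forall>\<rho>\<in>V0 \<union> V1. \<exists>up. mset_bij up {\<tau>\<in>V. codim1 \<rho> \<tau>} (T \<rho>) \<and>
          (\<forall>\<tau>\<in>{\<tau>\<in>V. codim1 \<rho> \<tau>}. up \<tau> \<in># T \<tau>)))"

definition vertex_tonnetz :: "'v set set \<Rightarrow> ('v set \<Rightarrow> pitch multiset) \<Rightarrow> bool" where
  "vertex_tonnetz V0 T \<longleftrightarrow> (\<forall>\<rho>\<in>V0. card (set_mset (T \<rho>)) = 1)"

end

theory Submission
  imports Defs
begin

lemma mset_bij_iff:
  assumes "finite A"
  shows "mset_bij \<phi> A C \<longleftrightarrow> C = image_mset \<phi> (mset_set A)"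
proof -
  have cnt: "count (image_mset \<phi> (mset_set A)) c = card {a\<in>A. \<phi> a = c}" for c
    using assms apply (simp add: count_image_mset' Collect_conj_eq Int_commute)
    by (rule arg_cong[where f=card]) auto
  show ?thesis
  proof
    assume h: "mset_bij \<phi> A C"
    show "C = image_mset \<phi> (mset_set A)"
    proof (rule multiset_eqI)
      fix c
      show "count C c = count (image_mset \<phi> (mset_set A)) c"
      proof (cases "c \<in># C")
        case True then show ?thesis using h cnt unfolding mset_bij_def by auto
      next
        case False
        then have "{a\<in>A. \<phi> a = c} = {}" using h unfolding mset_bij_def by auto
        then show ?thesis using False cnt[of c] by (metis card.empty not_in_iff)
      qed
    qed
  next
    assume h: "C = image_mset \<phi> (mset_set A)"
    show "mset_bij \<phi> A C" unfolding mset_bij_def h using assms cnt by auto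
  qed
qed

lemma ts_facts:
  assumes "triangulated_surface V0 V1 V2"
  shows "\<rho>\<in>V0 \<Longrightarrow> \<exists>v. \<rho> = {v}"
    and "e\<in>V1 \<Longrightarrow> card e = 2"
    and "e\<in>V1 \<Longrightarrow> v\<in>e \<Longrightarrow> {v}\<in>V0"
    and "f\<in>V2 \<Longrightarrow> card f = 3"
    and "f\<in>V2 \<Longrightarrow> e \<subseteq> f \<Longrightarrow> card e = 2 \<Longrightarrow> e\<in>V1"
    and "e\<in>V1 \<Longrightarrow> card {f\<in>V2. e \<subseteq> f} = 2"
    and "{v}\<in>V0 \<Longrightarrow> finite {e\<in>V1. v\<in>e}"
    and "{v}\<in>V0 \<Longrightarrow> \<exists>u. {v,u} \<in> V1"
  using assms unfolding triangulated_surface_def vlink_def by - (auto, blast?)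

lemma card_V0: "triangulated_surface V0 V1 V2 \<Longrightarrow> \<rho>\<in>V0 \<Longrightarrow> card \<rho> = 1"
  using ts_facts(1) by fastforce

lemma up0:
  assumes ts: "triangulated_surface V0 V1 V2" and r: "{v} \<in> V0"
  shows "{\<tau>\<in>V0 \<union> V1 \<union> V2. codim1 {v} \<tau>} = {e\<in>V1. v\<in>e}"
  using card_V0[OF ts] ts_facts(2,4)[OF ts] unfolding codim1_def by fastforce

lemma down1:
  assumes ts: "triangulated_surface V0 V1 V2" and s: "\<sigma> \<in> V1"
  shows "{\<tau>\<in>V0 \<union> V1 \<union> V2. codim1 \<tau> \<sigma>} = {\<rho>\<in>V0. \<rho> < \<sigma>}"
proof -
  have fin: "finite \<sigma>" using ts_facts(2)[OF ts s] card.infinite by fastforce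
  show ?thesis
  proof (intro set_eqI iffI)
    fix \<tau> assume "\<tau> \<in> {\<tau>\<in>V0 \<union> V1 \<union> V2. codim1 \<tau> \<sigma>}"
    then have "\<tau>\<in>V0 \<union> V1 \<union> V2" "\<tau> \<subseteq> \<sigma>" "card \<tau> = 1" using ts_facts(2)[OF ts s] unfolding codim1_def by auto
    then show "\<tau> \<in> {\<rho>\<in>V0. \<rho> < \<sigma>}" using ts_facts(2,4)[OF ts] ts_facts(2)[OF ts s] by fastforce
  next
    fix \<tau> assume "\<tau> \<in> {\<rho>\<in>V0. \<rho> < \<sigma>}"
    then show "\<tau> \<in> {\<tau>\<in>V0 \<union> V1 \<union> V2. codim1 \<tau> \<sigma>}"
      using card_V0[OF ts] ts_facts(2)[OF ts s] unfolding codim1_def by auto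
  qed
qed

lemma up1:
  assumes ts: "triangulated_surface V0 V1 V2" and s: "\<sigma> \<in> V1"
  shows "{\<tau>\<in>V0 \<union> V1 \<union> V2. codim1 \<sigma> \<tau>} = {f\<in>V2. \<sigma> \<subseteq> f}"
  using card_V0[OF ts] ts_facts(2,4)[OF ts] s unfolding codim1_def by fastforce

lemma edges3: "a\<noteq>b \<Longrightarrow> b\<noteq>c \<Longrightarrow> a\<noteq>c \<Longrightarrow>
   {e. e \<subseteq> {a,b,c} \<and> card e = 2} = {{a,b},{b,c},{a,c}}"
  apply (rule set_eqI)
  apply (auto simp: card_2_iff)
  done


lemma card_V1_V2_disj:
  assumes ts: "triangulated_surface V0 V1 V2"
  shows "\<sigma>\<in>V1 \<Longrightarrow> \<sigma>\<notin>V0" "\<sigma>\<in>V2 \<Longrightarrow> \<sigma>\<notin>V0" "\<sigma>\<in>V2 \<Longrightarrow> \<sigma>\<notin>V1"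
  using card_V0[OF ts] ts_facts(2,4)[OF ts] by fastforce+

lemma face_verts:
  assumes ts: "triangulated_surface V0 V1 V2" and s: "{a,b,c} \<in> V2"
    and d: "a\<noteq>b" "b\<noteq>c" "a\<noteq>c"
  shows "{\<rho>\<in>V0. \<rho> < {a,b,c}} = {{a},{b},{c}}"
proof -
  have e: "{a,b} \<in> V1" "{b,c} \<in> V1" using ts_facts(5)[OF ts s] d by auto
  have v: "{a}\<in>V0" "{b}\<in>V0" "{c}\<in>V0" using ts_facts(3)[OF ts] e by auto
  show ?thesis
  proof (intro set_eqI iffI)
    fix \<rho> assume "\<rho> \<in> {\<rho>\<in>V0. \<rho> < {a,b,c}}"
    then show "\<rho> \<in> {{a},{b},{c}}" using ts_facts(1)[OF ts] by fastforce
  next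
    fix \<rho> assume "\<rho> \<in> {{a},{b},{c}}"
    then show "\<rho> \<in> {\<rho>\<in>V0. \<rho> < {a,b,c}}" using v d by auto
  qed
qed

lemma face_edges:
  assumes ts: "triangulated_surface V0 V1 V2" and s: "{a,b,c} \<in> V2"
    and d: "a\<noteq>b" "b\<noteq>c" "a\<noteq>c"
  shows "{\<tau>\<in>V0 \<union> V1 \<union> V2. codim1 \<tau> {a,b,c}} = {{a,b},{b,c},{a,c}}"
proof -
  have c3: "card {a,b,c} = 3" using d by auto
  have "{\<tau>\<in>V0 \<union> V1 \<union> V2. codim1 \<tau> {a,b,c}} = {e. e \<subseteq> {a,b,c} \<and> card e = 2}"
    using c3 ts_facts(5)[OF ts s] ts_facts(2)[OF ts] unfolding codim1_def by auto
  then show ?thesis using edges3[OF d] by simp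
qed

lemma fin_below: "finite \<sigma> \<Longrightarrow> finite {\<rho>\<in>V0. \<rho> < \<sigma>}"
  by (rule finite_subset[of _ "Pow \<sigma>"]) auto

theorem mainTheorem2:
  fixes V0 V1 V2 :: "'v set set" and V :: "'v set \<Rightarrow> pitch"
  assumes "triangulated_surface V0 V1 V2"
  shows "\<exists>T. (surface_tonnetz V0 V1 V2 T \<and> vertex_tonnetz V0 T \<and>
              (\<forall>\<rho>\<in>V0. set_mset (T \<rho>) = {V \<rho>}) \<and>
              (\<forall>\<sigma>\<in>V2. T \<sigma> = image_mset V (mset_set {\<rho>\<in>V0. \<rho> < \<sigma>}))) \<and>
           (\<forall>T'. surface_tonnetz V0 V1 V2 T' \<and> vertex_tonnetz V0 T' \<and>
              (\<forall>\<rho>\<in>V0. set_mset (T' \<rho>) = {V \<rho>}) \<and>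
              (\<forall>\<sigma>\<in>V2. T' \<sigma> = image_mset V (mset_set {\<rho>\<in>V0. \<rho> < \<sigma>}))
              \<longrightarrow> (\<forall>\<sigma>\<in>V0 \<union> V1 \<union> V2. T' \<sigma> = T \<sigma>))"
proof -
  note ts = assms
  define W where "W = V0 \<union> V1 \<union> V2"
  define T where "T \<sigma> = (if \<sigma> \<in> V0 then image_mset (\<lambda>_. V \<sigma>) (mset_set {\<tau>\<in>W. codim1 \<sigma> \<tau>})
      else image_mset V (mset_set {\<rho>\<in>V0. \<rho> < \<sigma>}))" for \<sigma>
  have finV1: "finite \<sigma>" if "\<sigma>\<in>V1" for \<sigma> using ts_facts(2)[OF ts that] card.infinite by fastforce
  have finV2: "finite \<sigma>" if "\<sigma>\<in>V2" for \<sigma> using ts_facts(4)[OF ts that] card.infinite by fastforce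
  have upfin: "finite {\<tau>\<in>W. codim1 \<rho> \<tau>}" "{\<tau>\<in>W. codim1 \<rho> \<tau>} \<noteq> {}" if r0: "\<rho>\<in>V0" for \<rho>
  proof -
    obtain v where v: "\<rho> = {v}" using ts_facts(1)[OF ts r0] by blast
    have eq: "{\<tau>\<in>W. codim1 \<rho> \<tau>} = {e\<in>V1. v\<in>e}" using up0[OF ts] r0 v W_def by simp
    show "finite {\<tau>\<in>W. codim1 \<rho> \<tau>}" using eq ts_facts(7)[OF ts] r0 v by simp
    obtain u where "{v,u} \<in> V1" using ts_facts(8)[OF ts] r0 v by blast
    then show "{\<tau>\<in>W. codim1 \<rho> \<tau>} \<noteq> {}" using eq by auto
  qed
  have T0: "set_mset (T \<rho>) = {V \<rho>}" if "\<rho>\<in>V0" for \<rho>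
    using upfin[OF that] that unfolding T_def by auto
  have Tnot0: "T \<sigma> = image_mset V (mset_set {\<rho>\<in>V0. \<rho> < \<sigma>})" if "\<sigma>\<in>V1 \<union> V2" for \<sigma>
    using that card_V1_V2_disj[OF ts] unfolding T_def by auto
  have mem: "V {x} \<in># T \<sigma>" if hm: "\<sigma>\<in>V1 \<union> V2" "x\<in>\<sigma>" for \<sigma> x
  proof -
    have fin: "finite \<sigma>" using hm finV1 finV2 by auto
    have c: "card \<sigma> \<ge> 2" using hm ts_facts(2,4)[OF ts] by fastforce
    have "{x} \<noteq> \<sigma>" using c by auto
    then have lt: "{x} < \<sigma>" using hm by auto
    have "{x} \<in> V0"
    proof (cases "\<sigma>\<in>V1")
      case True then show ?thesis using ts_facts(3)[OF ts] hm by blast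
    next
      case False
      then have s2: "\<sigma>\<in>V2" using hm by auto
      obtain y where y: "y\<in>\<sigma>" "y\<noteq>x" using c \<open>{x} \<noteq> \<sigma>\<close> hm(2) by blast
      have "{x,y} \<in> V1" using ts_facts(5)[OF ts s2, of "{x,y}"] y hm(2) by auto
      then show ?thesis using ts_facts(3)[OF ts] by blast
    qed
    then show ?thesis using Tnot0[OF hm(1)] lt fin_below[OF fin] by auto
  qed
  have surf: "surface_tonnetz V0 V1 V2 T"
    unfolding surface_tonnetz_def Let_def W_def[symmetric]
  proof (intro conjI ballI)
    fix \<sigma> assume s: "\<sigma> \<in> V1 \<union> V2"
    show "\<exists>bd. mset_bij bd {\<tau>\<in>W. codim1 \<tau> \<sigma>} (T \<sigma>) \<and> (\<forall>\<tau>\<in>{\<tau>\<in>W. codim1 \<tau> \<sigma>}. bd \<tau> \<in># T \<tau>)"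
    proof (cases "\<sigma> \<in> V1")
      case True
      have eq: "{\<tau>\<in>W. codim1 \<tau> \<sigma>} = {\<rho>\<in>V0. \<rho> < \<sigma>}" using down1[OF ts True] W_def by simp
      show ?thesis
      proof (intro exI conjI)
        show "mset_bij V {\<tau>\<in>W. codim1 \<tau> \<sigma>} (T \<sigma>)"
          unfolding eq Tnot0[OF s] mset_bij_iff[OF fin_below[of \<sigma> V0, OF finV1[OF True]]] by (rule refl)
        show "\<forall>\<tau>\<in>{\<tau>\<in>W. codim1 \<tau> \<sigma>}. V \<tau> \<in># T \<tau>" using eq T0 by auto
      qed
    next
      case False
      then have s2: "\<sigma> \<in> V2" using s by auto
      obtain a b c where abc: "\<sigma> = {a,b,c}" "a\<noteq>b" "b\<noteq>c" "a\<noteq>c"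
        using ts_facts(4)[OF ts s2] card_3_iff by metis
      have s2': "{a,b,c} \<in> V2" using s2 abc by simp
      have eq: "{\<tau>\<in>W. codim1 \<tau> \<sigma>} = {{a,b},{b,c},{a,c}}"
        using face_edges[OF ts s2' abc(2-4)] abc W_def by simp
      have vs: "{\<rho>\<in>V0. \<rho> < \<sigma>} = {{a},{b},{c}}" using face_verts[OF ts s2' abc(2-4)] abc by simp
      define bd where "bd e = (if e = {a,b} then V {a} else if e = {b,c} then V {b} else V {c})" for e
      have ne: "{a,b} \<noteq> {b,c}" "{a,b} \<noteq> {a,c}" "{b,c} \<noteq> {a,c}" "{a} \<noteq> {b}" "{a} \<noteq> {c}" "{b} \<noteq> {c}"
        using abc(2-4) by (auto simp: doubleton_eq_iff)
      have e1: "{a,b} \<in> V1 \<union> V2" "{b,c} \<in> V1 \<union> V2" "{a,c} \<in> V1 \<union> V2"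
        using ts_facts(5)[OF ts s2'] abc(2-4) by auto
      show ?thesis
      proof (intro exI conjI)
        show "mset_bij bd {\<tau>\<in>W. codim1 \<tau> \<sigma>} (T \<sigma>)"
          unfolding mset_bij_iff[OF finite_subset[OF _ finite.emptyI]] eq
          by (simp add: mset_bij_iff eq Tnot0[OF s] vs ne ne[symmetric] abc(2-4) bd_def add_mset_commute)
        show "\<forall>\<tau>\<in>{\<tau>\<in>W. codim1 \<tau> \<sigma>}. bd \<tau> \<in># T \<tau>"
          unfolding eq bd_def using mem[OF e1(1)] mem[OF e1(2)] mem[OF e1(3)] ne by auto
      qed
    qed
  next
    fix \<rho> assume r: "\<rho> \<in> V0 \<union> V1"
    show "\<exists>up. mset_bij up {\<tau>\<in>W. codim1 \<rho> \<tau>} (T \<rho>) \<and> (\<forall>\<tau>\<in>{\<tau>\<in>W. codim1 \<rho> \<tau>}. up \<tau> \<in># T \<tau>)"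
    proof (cases "\<rho> \<in> V0")
      case True
      obtain v where v: "\<rho> = {v}" using ts_facts(1)[OF ts True] by blast
      have eq: "{\<tau>\<in>W. codim1 \<rho> \<tau>} = {e\<in>V1. v\<in>e}" using up0[OF ts] True v W_def by simp
      show ?thesis
      proof (intro exI conjI)
        show "mset_bij (\<lambda>_. V \<rho>) {\<tau>\<in>W. codim1 \<rho> \<tau>} (T \<rho>)"
          unfolding mset_bij_iff[OF upfin(1)[OF True]] T_def using True by simp
        show "\<forall>\<tau>\<in>{\<tau>\<in>W. codim1 \<rho> \<tau>}. V \<rho> \<in># T \<tau>" using eq v mem by auto
      qed
    next
      case False
      then have r1: "\<rho> \<in> V1" using r by auto
      obtain a b where ab: "\<rho> = {a,b}" "a\<noteq>b" using ts_facts(2)[OF ts r1] card_2_iff by metis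
      have eq: "{\<tau>\<in>W. codim1 \<rho> \<tau>} = {f\<in>V2. \<rho> \<subseteq> f}" using up1[OF ts r1] W_def by simp
      obtain f1 f2 where f: "{f\<in>V2. \<rho> \<subseteq> f} = {f1,f2}" "f1\<noteq>f2"
        using ts_facts(6)[OF ts r1] card_2_iff by metis
      have fs: "f1 \<in> V2" "\<rho> \<subseteq> f1" "f2 \<in> V2" "\<rho> \<subseteq> f2" using f(1) by blast+
      have vs: "{\<rho>'\<in>V0. \<rho>' < \<rho>} = {{a},{b}}"
      proof (intro set_eqI iffI)
        fix x assume "x \<in> {\<rho>'\<in>V0. \<rho>' < \<rho>}"
        then show "x \<in> {{a},{b}}" using ts_facts(1)[OF ts] ab by fastforce
      next
        fix x assume "x \<in> {{a},{b}}"
        then show "x \<in> {\<rho>'\<in>V0. \<rho>' < \<rho>}" using ts_facts(3)[OF ts r1] ab by auto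
      qed
      define up where "up f = (if f = f1 then V {a} else V {b})" for f
      have ne: "{a} \<noteq> {b}" using ab by auto
      show ?thesis
      proof (intro exI conjI)
        show "mset_bij up {\<tau>\<in>W. codim1 \<rho> \<tau>} (T \<rho>)"
          using f(2) not_sym[OF f(2)] ab(2) by (simp add: mset_bij_iff eq f Tnot0 r1 vs ne up_def)
        show "\<forall>\<tau>\<in>{\<tau>\<in>W. codim1 \<rho> \<tau>}. up \<tau> \<in># T \<tau>"
          unfolding eq f up_def using mem fs ab by auto
      qed
    qed
  qed
  show ?thesis
  proof (intro exI conjI allI impI ballI)
    show "surface_tonnetz V0 V1 V2 T" by (rule surf)
    show "vertex_tonnetz V0 T" unfolding vertex_tonnetz_def using T0 by simp
    show "\<And>\<rho>. \<rho>\<in>V0 \<Longrightarrow> set_mset (T \<rho>) = {V \<rho>}" by (rule T0)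
    show "\<And>\<sigma>. \<sigma>\<in>V2 \<Longrightarrow> T \<sigma> = image_mset V (mset_set {\<rho>\<in>V0. \<rho> < \<sigma>})" using Tnot0 by simp
  next
    fix T' \<sigma>
    assume h: "surface_tonnetz V0 V1 V2 T' \<and> vertex_tonnetz V0 T' \<and>
              (\<forall>\<rho>\<in>V0. set_mset (T' \<rho>) = {V \<rho>}) \<and>
              (\<forall>\<sigma>\<in>V2. T' \<sigma> = image_mset V (mset_set {\<rho>\<in>V0. \<rho> < \<sigma>}))"
      and s: "\<sigma> \<in> V0 \<union> V1 \<union> V2"
    have down: "\<exists>bd. mset_bij bd {\<tau>\<in>W. codim1 \<tau> \<sigma>} (T' \<sigma>) \<and> (\<forall>\<tau>\<in>{\<tau>\<in>W. codim1 \<tau> \<sigma>}. bd \<tau> \<in># T' \<tau>)"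
      if "\<sigma> \<in> V1 \<union> V2" for \<sigma>
      using h that unfolding surface_tonnetz_def Let_def W_def by blast
    have upw: "\<exists>up. mset_bij up {\<tau>\<in>W. codim1 \<sigma> \<tau>} (T' \<sigma>) \<and> (\<forall>\<tau>\<in>{\<tau>\<in>W. codim1 \<sigma> \<tau>}. up \<tau> \<in># T' \<tau>)"
      if "\<sigma> \<in> V0 \<union> V1" for \<sigma>
      using h that unfolding surface_tonnetz_def Let_def W_def by blast
    consider "\<sigma>\<in>V0" | "\<sigma>\<in>V1" | "\<sigma>\<in>V2" using s by blast
    then show "T' \<sigma> = T \<sigma>"
    proof cases
      case 1
      obtain up where up: "mset_bij up {\<tau>\<in>W. codim1 \<sigma> \<tau>} (T' \<sigma>)" using upw 1 by blast
      have "T' \<sigma> = image_mset up (mset_set {\<tau>\<in>W. codim1 \<sigma> \<tau>})"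
        by (rule mset_bij_iff[OF upfin(1)[OF 1], THEN iffD1, OF up])
      also have "\<dots> = image_mset (\<lambda>_. V \<sigma>) (mset_set {\<tau>\<in>W. codim1 \<sigma> \<tau>})"
      proof (rule image_mset_cong)
        fix x assume "x \<in># mset_set {\<tau>\<in>W. codim1 \<sigma> \<tau>}"
        then have "up x \<in># T' \<sigma>" using up unfolding mset_bij_def
          using upfin(1)[OF 1] by auto
        then show "up x = V \<sigma>" using h 1 by auto
      qed
      also have "\<dots> = T \<sigma>" using 1 unfolding T_def by simp
      finally show ?thesis .
    next
      case 2
      obtain bd where bd: "mset_bij bd {\<tau>\<in>W. codim1 \<tau> \<sigma>} (T' \<sigma>)" "\<forall>\<tau>\<in>{\<tau>\<in>W. codim1 \<tau> \<sigma>}. bd \<tau> \<in># T' \<tau>"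
        using down 2 by blast
      have eq: "{\<tau>\<in>W. codim1 \<tau> \<sigma>} = {\<rho>\<in>V0. \<rho> < \<sigma>}" using down1[OF ts 2] W_def by simp
      have fin: "finite {\<rho>\<in>V0. \<rho> < \<sigma>}" using fin_below finV1[OF 2] by blast
      have "T' \<sigma> = image_mset bd (mset_set {\<rho>\<in>V0. \<rho> < \<sigma>})"
        using mset_bij_iff[OF fin, THEN iffD1] bd(1) unfolding eq by blast
      also have "\<dots> = image_mset V (mset_set {\<rho>\<in>V0. \<rho> < \<sigma>})"
      proof (rule image_mset_cong)
        fix x assume "x \<in># mset_set {\<rho>\<in>V0. \<rho> < \<sigma>}"
        then have x: "x \<in> V0" "bd x \<in># T' x" using bd(2) eq fin by auto
        then show "bd x = V x" using h by auto
      qed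
      also have "\<dots> = T \<sigma>" using Tnot0 2 by simp
      finally show ?thesis .
    next
      case 3
      then show ?thesis using h Tnot0 by simp
    qed
  qed
qed

end
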